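(* A Poisson $n$-Lie algebra $\mathcal P$ of arbitrary dimension is nilpotent if and only if both its associative part $\mathcal P_A=(\mathcal P,\cdot)$ and its $n$-Lie part $\mathcal P_L=(\mathcal P,[-,\dots,-])$ are nilpotent.
   Context: A Poisson $n$-Lie algebra is a commutative associative algebra $(\mathcal P,\cdot)$ with an $n$-linear skew-symmetric bracket satisfying the fundamental identity $[x_1,\dots,x_{n-1},[y_1,\dots,y_n]]=\sum_{i=1}^n[y_1,\dots,[x_1,\dots,x_{n-1},y_i],\dots,y_n]$ and the Leibniz rule $[y\cdot z,x_2,\dots,x_n]=y\cdot[z,x_2,\dots,x_n]+z\cdot[y,x_2,\dots,x_n]$. Products/brackets of subspaces denote linear spans. $\mathcal P$ is nilpotent if $\mathcal P^s=0$ for some $s$, where $\mathcal P^1=\mathcal P$, $\mathcal P^{k+1}=[\mathcal P^k,\mathcal P,\dots,\mathcal P]+\mathcal P^k\cdot\mathcal P$. $\mathcal P_A$ is nilpotent if all products of some fixed number $s$ of elements vanish. $\mathcal P_L$ is nilpotent if $L^s=0$ for some $s$, where $L^1=\mathcal P$, $L^{k+1}=[L^k,\mathcal P,\dots,\mathcal P]$. *)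

theory Defs
  imports Main "HOL.Vector_Spaces"
begin

text \<open>The underlying space is a
type 'a carrying a commutative associative (not necessarily unital) ring structure,
made into a 'k-vector space by scale; the multiplication is bilinear.
The n-ary bracket takes its arguments as a sequence x 0, ..., x (n-1)
(values at indices >= n are ignored).\<close>

definition poisson_nlie ::
  "('k::field \<Rightarrow> 'a::comm_ring \<Rightarrow> 'a) \<Rightarrow> nat \<Rightarrow> ((nat \<Rightarrow> 'a) \<Rightarrow> 'a) \<Rightarrow> bool" where
  "poisson_nlie scale n br \<longleftrightarrow>
     vector_space scale \<and>
     n \<ge> 2 \<and>
     (\<forall>c a b. scale c (a * b) = scale c a * b) \<and>
     (\<forall>x y. (\<forall>i<n. x i = y i) \<longrightarrow> br x = br y) \<and>
     (\<forall>x i a b. i < n \<longrightarrow> br (x(i := a + b)) = br (x(i := a)) + br (x(i := b))) \<and>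
     (\<forall>x i c a. i < n \<longrightarrow> br (x(i := scale c a)) = scale c (br (x(i := a)))) \<and>
     (\<forall>x i j. i < n \<longrightarrow> j < n \<longrightarrow> i \<noteq> j \<longrightarrow> br (x(i := x j, j := x i)) = - br x) \<and>
     (\<forall>x y. br (x(n - 1 := br y)) = (\<Sum>i<n. br (y(i := br (x(n - 1 := y i)))))) \<and>
     (\<forall>x a b. br (x(0 := a * b)) = a * br (x(0 := b)) + b * br (x(0 := a)))"

text \<open>Lower central series of the whole Poisson n-Lie algebra, indexed from 0:
 pseries k corresponds to P^(k+1).\<close>
fun pseries :: "('k::field \<Rightarrow> 'a::comm_ring \<Rightarrow> 'a) \<Rightarrow> nat \<Rightarrow> ((nat \<Rightarrow> 'a) \<Rightarrow> 'a) \<Rightarrow> nat \<Rightarrow> 'a set" where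
  "pseries scale n br 0 = UNIV"
| "pseries scale n br (Suc k) = module.span scale
     ({br x | x. x 0 \<in> pseries scale n br k} \<union> {a * b | a b. a \<in> pseries scale n br k})"

definition poisson_nilpotent :: "('k::field \<Rightarrow> 'a::comm_ring \<Rightarrow> 'a) \<Rightarrow> nat \<Rightarrow> ((nat \<Rightarrow> 'a) \<Rightarrow> 'a) \<Rightarrow> bool" where
  "poisson_nilpotent scale n br \<longleftrightarrow> (\<exists>s. pseries scale n br s = {0})"

text \<open>Lower central series of the n-Lie part, indexed from 0: lseries k = L^(k+1).\<close>
fun lseries :: "('k::field \<Rightarrow> 'a::comm_ring \<Rightarrow> 'a) \<Rightarrow> nat \<Rightarrow> ((nat \<Rightarrow> 'a) \<Rightarrow> 'a) \<Rightarrow> nat \<Rightarrow> 'a set" where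
  "lseries scale n br 0 = UNIV"
| "lseries scale n br (Suc k) = module.span scale {br x | x. x 0 \<in> lseries scale n br k}"

definition lie_nilpotent :: "('k::field \<Rightarrow> 'a::comm_ring \<Rightarrow> 'a) \<Rightarrow> nat \<Rightarrow> ((nat \<Rightarrow> 'a) \<Rightarrow> 'a) \<Rightarrow> bool" where
  "lie_nilpotent scale n br \<longleftrightarrow> (\<exists>s. lseries scale n br s = {0})"

text \<open>prodn k x = x 0 * x 1 * ... * x k (a product of k+1 elements).\<close>
fun prodn :: "nat \<Rightarrow> (nat \<Rightarrow> 'a::comm_ring) \<Rightarrow> 'a" where
  "prodn 0 x = x 0"
| "prodn (Suc k) x = prodn k x * x (Suc k)"

definition assoc_nilpotent :: "'a::comm_ring itself \<Rightarrow> bool" where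
  "assoc_nilpotent _ \<longleftrightarrow> (\<exists>k. \<forall>x::nat \<Rightarrow> 'a. prodn k x = 0)"

end

theory Submission
  imports Defs
begin

definition mon :: "('k::field \<Rightarrow> 'a::comm_ring \<Rightarrow> 'a) \<Rightarrow> nat \<Rightarrow> ((nat \<Rightarrow> 'a) \<Rightarrow> 'a) \<Rightarrow> nat \<Rightarrow> 'a set" where
  "mon scale n br w = {prodn r f | r f. \<exists>j. (\<forall>t\<le>r. f t \<in> lseries scale n br (j t)) \<and> r + (\<Sum>t\<le>r. j t) = w}"

lemma prodn_cong: "(\<And>t. t \<le> r \<Longrightarrow> f t = g t) \<Longrightarrow> prodn r f = prodn r g"
  by (induction r) auto

lemma prodn_zero_ge: "prodn k f = 0 \<Longrightarrow> k \<le> r \<Longrightarrow> prodn r f = 0"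
  by (induction r) (auto simp: le_Suc_eq)

lemma prodn_zero_factor: "t \<le> r \<Longrightarrow> f t = 0 \<Longrightarrow> prodn r f = 0"
  by (induction r) (auto simp: le_Suc_eq)

lemma pn_basic:
  assumes "poisson_nlie scale n br"
  shows "br (x(0 := a + b)) = br (x(0 := a)) + br (x(0 := b))"
    and "br (x(0 := scale c a)) = scale c (br (x(0 := a)))"
    and "br (x(0 := 0)) = 0"
    and "br (x(0 := a * b)) = a * br (x(0 := b)) + b * br (x(0 := a))"
    and "scale c a * b = scale c (a * b)"
    and "vector_space scale"
proof -
  have n: "0 < n" using assms unfolding poisson_nlie_def by auto
  show 1: "br (x(0 := a + b)) = br (x(0 := a)) + br (x(0 := b))" for a b
    using assms n unfolding poisson_nlie_def by blast
  show "br (x(0 := scale c a)) = scale c (br (x(0 := a)))"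
    using assms n unfolding poisson_nlie_def by blast
  show "br (x(0 := 0)) = 0" using 1[of 0 0] by simp
  show "br (x(0 := a * b)) = a * br (x(0 := b)) + b * br (x(0 := a))"
    using assms unfolding poisson_nlie_def by blast
  show "scale c a * b = scale c (a * b)"
    using assms unfolding poisson_nlie_def by metis
  show "vector_space scale" using assms unfolding poisson_nlie_def by blast
qed

lemma lin_br:
  assumes P: "poisson_nlie scale n br"
    and a: "a \<in> module.span scale S"
    and h: "\<And>s. s \<in> S \<Longrightarrow> br (x(0 := s)) \<in> module.span scale T"
  shows "br (x(0 := a)) \<in> module.span scale T"
proof -
  interpret vector_space scale using pn_basic(6)[OF P] .
  from a show ?thesis
  proof (induction rule: span_induct_alt)
    case base then show ?case using pn_basic(3)[OF P] span_zero by metis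
  next
    case (step c s y)
    then show ?case using pn_basic(1,2)[OF P] h span_add span_scale by metis
  qed
qed

lemma lin_mult:
  assumes P: "poisson_nlie scale n br"
    and a: "a \<in> module.span scale S"
    and h: "\<And>s. s \<in> S \<Longrightarrow> s * d \<in> module.span scale T"
  shows "a * d \<in> module.span scale T"
proof -
  interpret vector_space scale using pn_basic(6)[OF P] .
  from a show ?thesis
  proof (induction rule: span_induct_alt)
    case base then show ?case using span_zero by simp
  next
    case (step c s y)
    have "(scale c s + y) * d = scale c (s * d) + y * d"
      using pn_basic(5)[OF P] by (simp add: distrib_right)
    then show ?case using step h span_add span_scale by metis
  qed
qed

lemma mult_mon:
  assumes P: "poisson_nlie scale n br"
    and m: "m \<in> module.span scale (mon scale n br w)"
    and c: "c \<in> lseries scale n br i"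
  shows "m * c \<in> module.span scale (mon scale n br (w + 1 + i))"
proof -
  interpret vector_space scale using pn_basic(6)[OF P] .
  show ?thesis
  proof (rule lin_mult[OF P m])
    fix s assume "s \<in> mon scale n br w"
    then obtain r f j where s: "s = prodn r f" and fj: "\<forall>t\<le>r. f t \<in> lseries scale n br (j t)"
      and w: "r + (\<Sum>t\<le>r. j t) = w" unfolding mon_def by blast
    define f' where "f' = f(Suc r := c)"
    define j' where "j' = j(Suc r := i)"
    have "prodn r f' = prodn r f" by (rule prodn_cong) (simp add: f'_def)
    then have e: "s * c = prodn (Suc r) f'" using s by (simp add: f'_def)
    have "\<forall>t\<le>Suc r. f' t \<in> lseries scale n br (j' t)"
      using fj c by (auto simp: f'_def j'_def le_Suc_eq)
    moreover have "(\<Sum>t\<le>Suc r. j' t) = (\<Sum>t\<le>r. j t) + i"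
      by (simp add: j'_def)
    ultimately have "s * c \<in> mon scale n br (w + 1 + i)"
      unfolding mon_def using e w by (intro CollectI exI[of _ "Suc r"] exI[of _ f']) (auto intro!: exI[of _ j'])
    then show "s * c \<in> span (mon scale n br (w + 1 + i))" by (rule span_base)
  qed
qed

lemma br_prodn:
  assumes P: "poisson_nlie scale n br"
  shows "(\<forall>t\<le>r. f t \<in> lseries scale n br (j t)) \<Longrightarrow>
    br (x(0 := prodn r f)) \<in> module.span scale (mon scale n br (Suc (r + (\<Sum>t\<le>r. j t))))"
proof (induction r arbitrary: f j)
  case 0
  interpret vector_space scale using pn_basic(6)[OF P] .
  have "br (x(0 := f 0)) \<in> lseries scale n br (Suc (j 0))"
    using 0 by (auto intro!: span_base)
  then have "br (x(0 := f 0)) \<in> mon scale n br (Suc (0 + (\<Sum>t\<le>0. j t)))"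
    unfolding mon_def
    by (intro CollectI exI[of _ 0] exI[of _ "\<lambda>_. br (x(0 := f 0))"]) (auto intro!: exI[of _ "\<lambda>_. Suc (j 0)"])
  then show ?case unfolding prodn.simps by (rule span_base)
next
  case (Suc r)
  interpret vector_space scale using pn_basic(6)[OF P] .
  define p where "p = prodn r f"
  define q where "q = f (Suc r)"
  define W where "W = Suc (Suc r + (\<Sum>t\<le>Suc r. j t))"
  have e: "br (x(0 := prodn (Suc r) f)) = p * br (x(0 := q)) + q * br (x(0 := p))"
    using pn_basic(4)[OF P] by (simp add: p_def q_def)
  have IH: "br (x(0 := p)) \<in> span (mon scale n br (Suc (r + (\<Sum>t\<le>r. j t))))"
  proof -
    have "\<forall>t\<le>r. f t \<in> lseries scale n br (j t)" using Suc.prems by auto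
    from Suc.IH[OF this] show ?thesis by (simp only: p_def)
  qed
  have q: "q \<in> lseries scale n br (j (Suc r))" using Suc.prems q_def by auto
  have t2: "br (x(0 := p)) * q \<in> span (mon scale n br W)"
    using mult_mon[OF P IH q] by (simp add: W_def add.assoc)
  have bq: "br (x(0 := q)) \<in> lseries scale n br (Suc (j (Suc r)))"
    using q by (auto intro!: span_base)
  define f' where "f' = f(Suc r := br (x(0 := q)))"
  define j' where "j' = j(Suc r := Suc (j (Suc r)))"
  have "prodn r f' = p" unfolding p_def by (rule prodn_cong) (simp add: f'_def)
  then have e1: "p * br (x(0 := q)) = prodn (Suc r) f'" by (simp add: f'_def)
  have "\<forall>t\<le>Suc r. f' t \<in> lseries scale n br (j' t)"
    using Suc.prems bq by (auto simp: f'_def j'_def le_Suc_eq)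
  moreover have "(\<Sum>t\<le>Suc r. j' t) = Suc (\<Sum>t\<le>Suc r. j t)"
    by (simp add: j'_def)
  ultimately have "p * br (x(0 := q)) \<in> mon scale n br W"
    unfolding mon_def W_def using e1
    by (intro CollectI exI[of _ "Suc r"] exI[of _ f']) (auto intro!: exI[of _ j'])
  then have t1: "p * br (x(0 := q)) \<in> span (mon scale n br W)" by (rule span_base)
  show ?case using e t1 t2 span_add unfolding W_def by (metis mult.commute)
qed

lemma pseries_mon:
  assumes P: "poisson_nlie scale n br"
  shows "pseries scale n br w \<subseteq> module.span scale (mon scale n br w)"
proof (induction w)
  case 0
  interpret vector_space scale using pn_basic(6)[OF P] .
  have "a \<in> mon scale n br 0" for a
    unfolding mon_def
    by (intro CollectI exI[of _ 0] exI[of _ "\<lambda>_. a"]) (auto intro!: exI[of _ "\<lambda>_. 0"])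
  then show ?case by (auto intro: span_base)
next
  case (Suc w)
  interpret vector_space scale using pn_basic(6)[OF P] .
  have A: "br x \<in> span (mon scale n br (Suc w))" if "x 0 \<in> pseries scale n br w" for x
  proof -
    have xx: "x = x(0 := x 0)" by simp
    have "br (x(0 := x 0)) \<in> span (mon scale n br (Suc w))"
    proof (rule lin_br[OF P])
      show "x 0 \<in> span (mon scale n br w)" using Suc that by auto
    next
      fix s assume "s \<in> mon scale n br w"
      then obtain r f j where s: "s = prodn r f" and fj: "\<forall>t\<le>r. f t \<in> lseries scale n br (j t)"
        and w: "r + (\<Sum>t\<le>r. j t) = w" unfolding mon_def by blast
      show "br (x(0 := s)) \<in> span (mon scale n br (Suc w))"
        using br_prodn[OF P fj, of x] s w by simp
    qed
    then show ?thesis using xx by metis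
  qed
  have B: "a * b \<in> span (mon scale n br (Suc w))" if "a \<in> pseries scale n br w" for a b
    using mult_mon[OF P _ _, of a w b 0] Suc that by auto
  show ?case
    unfolding pseries.simps
  proof (rule span_minimal)
    show "{br x |x. x 0 \<in> pseries scale n br w} \<union> {a * b |a b. a \<in> pseries scale n br w}
      \<subseteq> span (mon scale n br (Suc w))" using A B by blast
  qed (rule subspace_span)
qed

lemma lseries_zero:
  assumes P: "poisson_nlie scale n br" and s: "lseries scale n br s = {0}"
  shows "m \<ge> s \<Longrightarrow> lseries scale n br m = {0}"
proof (induction m)
  case 0 then show ?case using s by simp
next
  case (Suc m)
  interpret vector_space scale using pn_basic(6)[OF P] .
  show ?case
  proof (cases "s = Suc m")
    case True then show ?thesis using s by simp
  next
    case False
    then have "s \<le> m" using Suc.prems by simp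
    then have "lseries scale n br m = {0}" using Suc.IH by blast
    have z: "br (\<lambda>_. 0) = 0" using pn_basic(3)[OF P, of "\<lambda>_. 0"] by (simp add: fun_upd_def)
    have z2: "br x = 0" if "x 0 = 0" for x using pn_basic(3)[OF P, of x] that by (metis fun_upd_triv)
    have "{br x | x. x 0 \<in> lseries scale n br m} = {0}"
    proof
      show "{br x | x. x 0 \<in> lseries scale n br m} \<subseteq> {0}"
        using \<open>lseries scale n br m = {0}\<close> z2 by blast
      show "{0} \<subseteq> {br x | x. x 0 \<in> lseries scale n br m}"
        using \<open>lseries scale n br m = {0}\<close> z by force
    qed
    then show ?thesis unfolding lseries.simps by simp
  qed
qed

lemma prodn_in_pseries:
  assumes P: "poisson_nlie scale n br"
  shows "prodn k x \<in> pseries scale n br k"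
proof (induction k)
  case 0 then show ?case by simp
next
  case (Suc k)
  interpret vector_space scale using pn_basic(6)[OF P] .
  show ?case unfolding prodn.simps pseries.simps by (rule span_base) (use Suc.IH in blast)
qed

lemma lseries_sub:
  assumes P: "poisson_nlie scale n br"
  shows "lseries scale n br k \<subseteq> pseries scale n br k"
proof (induction k)
  case 0 then show ?case by simp
next
  case (Suc k)
  interpret vector_space scale using pn_basic(6)[OF P] .
  show ?case unfolding lseries.simps pseries.simps by (rule span_mono) (use Suc.IH in blast)
qed

theorem proposition5p4:
  fixes scale :: "'k::field \<Rightarrow> 'a::comm_ring \<Rightarrow> 'a"
    and n :: nat and br :: "(nat \<Rightarrow> 'a) \<Rightarrow> 'a"
  assumes "poisson_nlie scale n br"
  shows "poisson_nilpotent scale n br \<longleftrightarrow>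
         assoc_nilpotent TYPE('a) \<and> lie_nilpotent scale n br"
proof -
  note P = assms
  interpret vector_space scale using pn_basic(6)[OF P] .
  have zl: "0 \<in> lseries scale n br k" for k by (cases k) (simp_all add: span_zero)
  show ?thesis
  proof
    assume "poisson_nilpotent scale n br"
    then obtain s where s: "pseries scale n br s = {0}" unfolding poisson_nilpotent_def by blast
    have "\<forall>x::nat \<Rightarrow> 'a. prodn s x = 0" using prodn_in_pseries[OF P, of s] s by blast
    moreover have "lseries scale n br s = {0}" using lseries_sub[OF P, of s] s zl by blast
    ultimately show "assoc_nilpotent TYPE('a) \<and> lie_nilpotent scale n br"
      unfolding assoc_nilpotent_def lie_nilpotent_def by blast
  next
    assume "assoc_nilpotent TYPE('a) \<and> lie_nilpotent scale n br"
    then obtain k s where k: "\<forall>x::nat \<Rightarrow> 'a. prodn k x = 0" and s: "lseries scale n br s = {0}"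
      unfolding assoc_nilpotent_def lie_nilpotent_def by blast
    define N where "N = Suc (k * s)"
    have M: "mon scale n br N \<subseteq> {0}"
    proof
      fix m assume "m \<in> mon scale n br N"
      then obtain r f j where m: "m = prodn r f" and fj: "\<forall>t\<le>r. f t \<in> lseries scale n br (j t)"
        and w: "r + (\<Sum>t\<le>r. j t) = N" unfolding mon_def by blast
      show "m \<in> {0}"
      proof (cases "k \<le> r")
        case True then show ?thesis using prodn_zero_ge[of k f r] k m by simp
      next
        case False
        show ?thesis
        proof (cases "\<exists>t\<le>r. j t \<ge> s")
          case True
          then obtain t where t: "t \<le> r" "j t \<ge> s" by blast
          then have "f t = 0" using fj lseries_zero[OF P s, of "j t"] by auto
          then show ?thesis using prodn_zero_factor[OF t(1)] m by simp
        next
          case F: False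
          have "(\<Sum>t\<le>r. Suc (j t)) \<le> (\<Sum>t\<le>r. s)"
            by (rule sum_mono) (use F in auto)
          moreover have "(\<Sum>t\<le>r. Suc (j t)) = (\<Sum>t\<le>r. j t) + Suc r"
            by (induction r) auto
          ultimately have "r + (\<Sum>t\<le>r. j t) + 1 \<le> (r + 1) * s"
            by simp
          also have "\<dots> \<le> k * s" using False by (intro mult_right_mono) auto
          finally show ?thesis using w unfolding N_def by linarith
        qed
      qed
    qed
    have "pseries scale n br N \<subseteq> {0}"
    proof -
      have "pseries scale n br N \<subseteq> span (mon scale n br N)" by (rule pseries_mon[OF P])
      also have "\<dots> \<subseteq> {0}" by (rule span_minimal[OF M]) (rule subspace_single_0)
      finally show ?thesis by simp
    qed
    moreover have "0 \<in> pseries scale n br N" unfolding N_def pseries.simps by (rule span_zero)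
    ultimately show "poisson_nilpotent scale n br" unfolding poisson_nilpotent_def by blast
  qed
qed

end
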